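(* Let $m$ be a prime power and let $l,s,t$ be positive integers such that $m\geq l-1$ and $2t-1\leq l$. Define $q=(s-1)m+1$. Suppose that $c\geq t$ is an integer such that $l=c(t-1)+r$ for some $r\in\{t,t+1,\ldots,c\}$. If there exists an $s$-ary $c$-frameproof code of length $l$ and cardinality $M$ satisfying Property $P(t)$, then there exists a $q$-ary $c$-frameproof code of length $l$ and cardinality $Mm^t$.
   Context: Let $F$ be a finite alphabet and $l$ a positive integer. For $P\subseteq F^l$, the set of descendants is $desc(P)=\{x\in F^l: \text{for every } i\in\{1,\ldots,l\} \text{ there is } y\in P \text{ with } x_i=y_i\}$. For an integer $c\geq 2$, a $c$-frameproof code is a subset $C\subseteq F^l$ such that $desc(P)\cap C=P$ for every $P\subseteq C$ with $|P|\leq c$. A code is $q$-ary if its alphabet has size $q$. An $s$-ary $c$-frameproof code $C$ of length $l$ over an alphabet $S$ of size $s$ satisfies Property $P(t)$ if there is a special element $\infty\in S$ such that every codeword contains at most $t-1$ coordinates equal to $\infty$, and every codeword is uniquely determined by specifying $t$ of its components that are not equal to $\infty$ (i.e., if $x,y\in C$ and there are $t$ coordinates $j$ with $x_j=y_j\neq\infty$, then $x=y$). *)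

theory Defs
  imports Main "HOL-Number_Theory.Prime_Powers"
begin

definition words :: "'a set \<Rightarrow> nat \<Rightarrow> 'a list set" where
  "words F l = {x. length x = l \<and> set x \<subseteq> F}"

definition desc :: "'a set \<Rightarrow> nat \<Rightarrow> 'a list set \<Rightarrow> 'a list set" where
  "desc F l P = {x \<in> words F l. \<forall>i<l. \<exists>y\<in>P. x ! i = y ! i}"

definition frameproof :: "'a set \<Rightarrow> nat \<Rightarrow> nat \<Rightarrow> 'a list set \<Rightarrow> bool" where
  "frameproof F l c C \<longleftrightarrow> 2 \<le> c \<and> C \<subseteq> words F l \<and>
     (\<forall>P. P \<subseteq> C \<and> card P \<le> c \<longrightarrow> desc F l P \<inter> C = P)"

definition qary_frameproof :: "nat \<Rightarrow> 'a set \<Rightarrow> nat \<Rightarrow> nat \<Rightarrow> 'a list set \<Rightarrow> bool" where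
  "qary_frameproof q F l c C \<longleftrightarrow> finite F \<and> card F = q \<and> frameproof F l c C"

definition property_P :: "nat \<Rightarrow> 'a set \<Rightarrow> nat \<Rightarrow> 'a list set \<Rightarrow> bool" where
  "property_P t S l C \<longleftrightarrow> (\<exists>inf \<in> S.
     (\<forall>x\<in>C. card {j. j < l \<and> x ! j = inf} \<le> t - 1) \<and>
     (\<forall>x\<in>C. \<forall>y\<in>C. (\<exists>J. J \<subseteq> {..<l} \<and> card J = t \<and>
          (\<forall>j\<in>J. x ! j = y ! j \<and> x ! j \<noteq> inf)) \<longrightarrow> x = y))"

end

theory Submission
  imports Defs "HOL-Algebra.Algebraic_Closure" "HOL-Number_Theory.Residues" "HOL-Computational_Algebra.Primes"
begin


context cring
begin

lemma binomial_ring: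
  assumes a: "a \<in> carrier R" and b: "b \<in> carrier R"
  shows "(a \<oplus> b) [^] n = (\<Oplus>k\<in>{..n}. [(n choose k)] \<cdot> (a [^] k \<otimes> b [^] (n - k)))"
proof (induction n)
  case 0
  thus ?case using a b by simp
next
  case (Suc n)
  define g where "g = (\<lambda>k. [(n choose k)] \<cdot> (a [^] k \<otimes> b [^] (Suc n - k)))"
  define h where "h = (\<lambda>k. [(n choose k)] \<cdot> (a [^] Suc k \<otimes> b [^] (n - k)))"
  have gc: "g \<in> UNIV \<rightarrow> carrier R" using a b by (auto simp: g_def)
  have hc: "h \<in> UNIV \<rightarrow> carrier R" using a b by (auto simp: h_def)
  have Bc: "(\<lambda>k. [(n choose k)] \<cdot> (a [^] k \<otimes> b [^] (n - k))) \<in> {..n} \<rightarrow> carrier R" using a b by auto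
  have "(a \<oplus> b) [^] Suc n = (a \<oplus> b) \<otimes> (a \<oplus> b) [^] n"
    using a b by (simp add: m_comm)
  also have "\<dots> = a \<otimes> (a \<oplus> b) [^] n \<oplus> b \<otimes> (a \<oplus> b) [^] n"
    using a b by (simp add: l_distr)
  also have "a \<otimes> (a \<oplus> b) [^] n = (\<Oplus>k\<in>{..n}. h k)"
  proof -
    have "a \<otimes> (a \<oplus> b) [^] n = (\<Oplus>k\<in>{..n}. a \<otimes> ([(n choose k)] \<cdot> (a [^] k \<otimes> b [^] (n - k))))"
      unfolding Suc.IH using finsum_rdistr[OF _ a Bc] by simp
    also have "\<dots> = (\<Oplus>k\<in>{..n}. h k)"
    proof (rule finsum_cong')
      show "h \<in> {..n} \<rightarrow> carrier R" using hc by auto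
      fix k assume "k \<in> {..n}"
      have "a \<otimes> ([(n choose k)] \<cdot> (a [^] k \<otimes> b [^] (n - k))) = [(n choose k)] \<cdot> (a \<otimes> (a [^] k \<otimes> b [^] (n - k)))"
        using a b by (intro add_pow_rdistr) auto
      also have "a \<otimes> (a [^] k \<otimes> b [^] (n - k)) = a [^] Suc k \<otimes> b [^] (n - k)"
        using a b by (simp add: m_ac)
      finally show "a \<otimes> ([(n choose k)] \<cdot> (a [^] k \<otimes> b [^] (n - k))) = h k" by (simp add: h_def)
    qed simp
    finally show ?thesis .
  qed
  also have "b \<otimes> (a \<oplus> b) [^] n = (\<Oplus>k\<in>{..n}. g k)"
  proof -
    have "b \<otimes> (a \<oplus> b) [^] n = (\<Oplus>k\<in>{..n}. b \<otimes> ([(n choose k)] \<cdot> (a [^] k \<otimes> b [^] (n - k))))"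
      unfolding Suc.IH using finsum_rdistr[OF _ b Bc] by simp
    also have "\<dots> = (\<Oplus>k\<in>{..n}. g k)"
    proof (rule finsum_cong')
      show "g \<in> {..n} \<rightarrow> carrier R" using gc by auto
      fix k assume "k \<in> {..n}"
      hence e: "Suc n - k = Suc (n - k)" by auto
      have "b \<otimes> ([(n choose k)] \<cdot> (a [^] k \<otimes> b [^] (n - k))) = [(n choose k)] \<cdot> (b \<otimes> (a [^] k \<otimes> b [^] (n - k)))"
        using a b by (intro add_pow_rdistr) auto
      also have "b \<otimes> (a [^] k \<otimes> b [^] (n - k)) = a [^] k \<otimes> b [^] Suc (n - k)"
        using a b by (simp add: m_ac)
      finally show "b \<otimes> ([(n choose k)] \<cdot> (a [^] k \<otimes> b [^] (n - k))) = g k" by (simp add: g_def e)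
    qed simp
    finally show ?thesis .
  qed
  also have "(\<Oplus>k\<in>{..n}. g k) = (\<Oplus>k\<in>{..Suc n}. g k)"
  proof -
    have "n choose Suc n = 0" by simp
    hence "g (Suc n) = \<zero>" unfolding g_def by (simp only:) simp
    moreover have "(\<Oplus>k\<in>{..Suc n}. g k) = g (Suc n) \<oplus> (\<Oplus>k\<in>{..n}. g k)"
      by (rule finsum_Suc) (use gc in auto)
    moreover have "(\<Oplus>k\<in>{..n}. g k) \<in> carrier R" using gc by (intro finsum_closed) auto
    ultimately show ?thesis by simp
  qed
  also have "\<dots> = (\<Oplus>k\<in>{..n}. g (Suc k)) \<oplus> g 0"
    by (rule finsum_Suc2) (use gc in auto)
  finally have L: "(a \<oplus> b) [^] Suc n = (\<Oplus>k\<in>{..n}. h k) \<oplus> ((\<Oplus>k\<in>{..n}. g (Suc k)) \<oplus> g 0)" .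
  define F where "F = (\<lambda>k. [(Suc n choose k)] \<cdot> (a [^] k \<otimes> b [^] (Suc n - k)))"
  have Fc: "F \<in> UNIV \<rightarrow> carrier R" using a b by (auto simp: F_def)
  have "(\<Oplus>k\<in>{..Suc n}. F k) = (\<Oplus>k\<in>{..n}. F (Suc k)) \<oplus> F 0"
    by (rule finsum_Suc2) (use Fc in auto)
  also have "(\<Oplus>k\<in>{..n}. F (Suc k)) = (\<Oplus>k\<in>{..n}. h k \<oplus> g (Suc k))"
  proof (rule finsum_cong')
    show "(\<lambda>k. h k \<oplus> g (Suc k)) \<in> {..n} \<rightarrow> carrier R" using gc hc by auto
    fix k assume "k \<in> {..n}"
    have "F (Suc k) = [((n choose k) + (n choose Suc k))] \<cdot> (a [^] Suc k \<otimes> b [^] (n - k))"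
      by (simp add: F_def)
    also have "\<dots> = h k \<oplus> g (Suc k)"
      using a b by (simp add: h_def g_def add.nat_pow_mult)
    finally show "F (Suc k) = h k \<oplus> g (Suc k)" .
  qed simp
  also have "\<dots> = (\<Oplus>k\<in>{..n}. h k) \<oplus> (\<Oplus>k\<in>{..n}. g (Suc k))"
    by (rule finsum_addf) (use gc hc in auto)
  finally have R: "(\<Oplus>k\<in>{..Suc n}. F k) = (\<Oplus>k\<in>{..n}. h k) \<oplus> (\<Oplus>k\<in>{..n}. g (Suc k)) \<oplus> F 0" .
  have "F 0 = g 0" by (simp add: F_def g_def)
  moreover have "(\<Oplus>k\<in>{..n}. h k) \<in> carrier R" "(\<Oplus>k\<in>{..n}. g (Suc k)) \<in> carrier R" "g 0 \<in> carrier R"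
    using gc hc by (auto intro!: finsum_closed)
  ultimately have "(\<Oplus>k\<in>{..Suc n}. F k) = (a \<oplus> b) [^] Suc n"
    using L R by (simp add: a_assoc)
  thus ?case by (simp add: F_def)
qed


lemma char_mult_zero:
  fixes p k :: nat
  assumes ch: "[p] \<cdot> \<one> = \<zero>" and d: "p dvd k" and y: "y \<in> carrier R"
  shows "[k] \<cdot> y = \<zero>"
proof -
  obtain j where k: "k = p * j" using d by blast
  have "[k] \<cdot> \<one> = [j] \<cdot> ([p] \<cdot> \<one>)" unfolding k using add.nat_pow_pow[of \<one> j p] by simp
  also have "\<dots> = \<zero>" using ch by simp
  finally have "[k] \<cdot> \<one> = \<zero>" .
  hence "([k] \<cdot> \<one>) \<otimes> y = \<zero>" using y by simp
  moreover have "([k] \<cdot> \<one>) \<otimes> y = [k] \<cdot> (\<one> \<otimes> y)" using y by (intro add_pow_ldistr) auto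
  ultimately show ?thesis using y by simp
qed

lemma frobenius:
  fixes p :: nat
  assumes p: "normalization_semidom_class.prime p" and ch: "[p] \<cdot> \<one> = \<zero>" and a: "a \<in> carrier R" and b: "b \<in> carrier R"
  shows "(a \<oplus> b) [^] p = a [^] p \<oplus> b [^] p"
proof -
  define f where "f = (\<lambda>k. [(p choose k)] \<cdot> (a [^] k \<otimes> b [^] (p - k)))"
  have fc: "f \<in> UNIV \<rightarrow> carrier R" using a b by (auto simp: f_def)
  have p1: "p > 1" using p prime_gt_1_nat by blast
  have "(a \<oplus> b) [^] p = (\<Oplus>k\<in>{..p}. f k)" unfolding f_def by (rule binomial_ring[OF a b])
  also have "{..p} = insert p (insert 0 {1..<p})" using p1 by auto
  also have "(\<Oplus>k\<in>insert p (insert 0 {1..<p}). f k) = f p \<oplus> (f 0 \<oplus> (\<Oplus>k\<in>{1..<p}. f k))"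
    using fc p1 by (simp add: finsum_insert Pi_def)
  also have "(\<Oplus>k\<in>{1..<p}. f k) = (\<Oplus>k\<in>{1..<p}. \<zero>)"
  proof (rule finsum_cong')
    fix k assume "k \<in> {1..<p}"
    hence "p dvd (p choose k)" using dvd_choose_prime[of k p] p by auto
    thus "f k = \<zero>" unfolding f_def using char_mult_zero[OF ch] a b by auto
  qed auto
  also have "\<dots> = \<zero>" by (rule finsum_zero)
  finally show ?thesis using a b by (simp add: f_def)
qed

lemma frobenius_pow:
  fixes p n :: nat
  assumes p: "normalization_semidom_class.prime p" and ch: "[p] \<cdot> \<one> = \<zero>" and a: "a \<in> carrier R" and b: "b \<in> carrier R"
  shows "(a \<oplus> b) [^] (p ^ n) = a [^] (p ^ n) \<oplus> b [^] (p ^ n)"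
proof (induction n)
  case 0 thus ?case using a b by (simp add: nat_pow_Suc)
next
  case (Suc n)
  have "(a \<oplus> b) [^] (p ^ Suc n) = ((a \<oplus> b) [^] (p ^ n)) [^] p"
    using a b nat_pow_pow[of "a \<oplus> b" "p ^ n" p] by (simp add: mult.commute)
  also have "\<dots> = (a [^] (p ^ n)) [^] p \<oplus> (b [^] (p ^ n)) [^] p"
    unfolding Suc.IH by (rule frobenius[OF p ch]) (use a b in auto)
  also have "\<dots> = a [^] (p ^ Suc n) \<oplus> b [^] (p ^ Suc n)"
    using a b by (simp add: nat_pow_pow mult.commute)
  finally show ?case .
qed
end

lemma (in ring_hom_ring) hom_add_pow_nat:
  fixes k :: nat
  assumes "x \<in> carrier R"
  shows "h ([k] \<cdot>\<^bsub>R\<^esub> x) = [k] \<cdot>\<^bsub>S\<^esub> (h x)"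
proof (induction k)
  case 0 thus ?case by simp
next
  case (Suc k)
  have "h ([Suc k] \<cdot>\<^bsub>R\<^esub> x) = h ([k] \<cdot>\<^bsub>R\<^esub> x \<oplus>\<^bsub>R\<^esub> x)" by (simp add: R.add.nat_pow_Suc)
  also have "\<dots> = h ([k] \<cdot>\<^bsub>R\<^esub> x) \<oplus>\<^bsub>S\<^esub> h x" using assms by simp
  also have "\<dots> = [Suc k] \<cdot>\<^bsub>S\<^esub> (h x)" using Suc by (simp add: S.add.nat_pow_Suc)
  finally show ?case .
qed

lemma size_eq_card_set_mset:
  assumes "\<And>a. count M a \<le> 1"
  shows "size M = card (set_mset M)"
  using assms
proof (induction M rule: multiset_induct)
  case empty thus ?case by simp
next
  case (add x M)
  have "count (add_mset x M) x \<le> 1" using add.prems by blast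
  hence "x \<notin># M" by (simp add: count_eq_zero_iff[symmetric])
  moreover have "size M = card (set_mset M)"
  proof (rule add.IH)
    fix a
    have "count M a \<le> count (add_mset x M) a" by simp
    thus "count M a \<le> 1" using add.prems le_trans by blast
  qed
  ultimately show ?case by simp
qed

context cring
begin
lemma aux_cancel_add:
  assumes "a \<in> carrier R" "b \<in> carrier R" "c \<in> carrier R"
  shows "(a \<oplus> c) \<ominus> (b \<oplus> c) = a \<ominus> b"
  using assms by algebra
lemma aux_factor:
  assumes "y \<in> carrier R" "z \<in> carrier R"
  shows "y \<otimes> z \<ominus> y = y \<otimes> (z \<ominus> \<one>)"
  using assms by algebra
end

context algebraically_closed
begin

lemma finite_subfield_exists:
  fixes p n :: nat
  assumes p: "normalization_semidom_class.prime p" and ch: "[p] \<cdot> \<one> = \<zero>" and n: "n > 0"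
  shows "\<exists>S. subfield S L \<and> finite S \<and> card S = p ^ n"
proof -
  define q where "q = p ^ n"
  have p1: "p > 1" using p prime_gt_1_nat by blast
  have q2: "q \<ge> 2"
  proof -
    have "p ^ 1 \<le> p ^ n" using p1 n by (intro power_increasing) auto
    thus ?thesis using p1 by (simp add: q_def)
  qed
  have frob: "(a \<oplus> b) [^] q = a [^] q \<oplus> b [^] q" if "a \<in> carrier L" "b \<in> carrier L" for a b
    unfolding q_def by (rule frobenius_pow[OF p ch that])
  define S where "S = {x \<in> carrier L. x [^] q = x}"
  have Sc: "S \<subseteq> carrier L" by (auto simp: S_def)
  have neg: "(\<ominus> a) [^] q = \<ominus> (a [^] q)" if a: "a \<in> carrier L" for a
  proof -
    have "a [^] q \<oplus> (\<ominus> a) [^] q = (a \<oplus> \<ominus> a) [^] q" using frob a by simp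
    also have "\<dots> = \<zero>" using a q2 by (simp add: r_neg nat_pow_zero)
    finally have "a [^] q \<oplus> (\<ominus> a) [^] q = \<zero>" .
    thus ?thesis using a by (metis minus_equality a_comm nat_pow_closed a_inv_closed)
  qed
  have subring: "subring S L"
  proof (rule subringI)
    show "S \<subseteq> carrier L" by (rule Sc)
    show "\<one> \<in> S" by (simp add: S_def)
    fix h assume "h \<in> S" thus "\<ominus> h \<in> S" using neg by (simp add: S_def)
  next
    fix h1 h2 assume "h1 \<in> S" "h2 \<in> S"
    thus "h1 \<otimes> h2 \<in> S" by (simp add: S_def nat_pow_distrib)
    show "h1 \<oplus> h2 \<in> S" using \<open>h1 \<in> S\<close> \<open>h2 \<in> S\<close> frob by (simp add: S_def)
  qed
  have subfield: "subfield S L"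
  proof (rule subfieldI'[OF subring])
    fix k assume k: "k \<in> S - {\<zero>}"
    hence kc: "k \<in> carrier L" "k \<noteq> \<zero>" "k [^] q = k" by (auto simp: S_def)
    hence ku: "k \<in> Units L" by (simp add: field_Units)
    have ic: "inv k \<in> carrier L" using ku by simp
    have "k \<otimes> (inv k) [^] q = k [^] q \<otimes> (inv k) [^] q" using kc by simp
    also have "\<dots> = (k \<otimes> inv k) [^] q" using kc ic by (simp add: nat_pow_distrib)
    also have "\<dots> = \<one>" using ku by simp
    finally have "inv k = (inv k) [^] q" using kc ic by (intro comm_inv_char) auto
    thus "inv k \<in> S" using ic by (simp add: S_def)
  qed

  interpret UP: domain "poly_ring L" using univ_poly_is_domain[OF carrier_is_subring] .
  have Xc: "X \<in> carrier (poly_ring L)" using var_closed(1)[OF carrier_is_subring] .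
  define P where "P = X [^]\<^bsub>poly_ring L\<^esub> q \<ominus>\<^bsub>poly_ring L\<^esub> X"
  have Pc: "P \<in> carrier (poly_ring L)" unfolding P_def using Xc by simp
  have evP: "eval P x = x [^] q \<ominus> x" if x: "x \<in> carrier L" for x
  proof -
    interpret E: ring_hom_ring "poly_ring L" L "\<lambda>p. eval p x"
      using eval_ring_hom[OF carrier_is_subring x] .
    have "eval P x = eval (X [^]\<^bsub>poly_ring L\<^esub> q) x \<oplus> \<ominus> eval X x"
      unfolding P_def a_minus_def using Xc by simp
    also have "eval (X [^]\<^bsub>poly_ring L\<^esub> q) x = (eval X x) [^] q"
      using E.hom_nat_pow Xc by simp
    finally show ?thesis using eval_var[OF x] by (simp add: a_minus_def)
  qed
  have degP: "degree P = q"
  proof -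
    have m: "X [^]\<^bsub>poly_ring L\<^esub> q = monom \<one> q"
      using unitary_monom_eq_var_pow[OF carrier_is_subring] by simp
    have mp: "polynomial (carrier L) (monom \<one> q)" by (intro monom_is_polynomial[OF carrier_is_subring]) auto
    have nXc: "\<ominus>\<^bsub>poly_ring L\<^esub> X \<in> carrier (poly_ring L)" using Xc by simp
    hence np: "polynomial (carrier L) (\<ominus>\<^bsub>poly_ring L\<^esub> X)" using univ_poly_carrier by blast
    have dnX: "degree (\<ominus>\<^bsub>poly_ring L\<^esub> X) = 1"
      using univ_poly_a_inv_degree[OF carrier_is_subring Xc] by (simp add: var_def)
    have "P = poly_add (monom \<one> q) (\<ominus>\<^bsub>poly_ring L\<^esub> X)"
      unfolding P_def a_minus_def m by (simp add: univ_poly_add)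
    moreover have "degree (monom \<one> q) = q" by (simp add: monom_def)
    ultimately show ?thesis
      using poly_add_degree_eq[OF carrier_is_subring mp np] dnX q2 by simp
  qed
  have Pne: "P \<noteq> []" using degP q2 by auto
  have rootsS: "set_mset (roots P) = S"
  proof -
    have "x \<in># roots P \<longleftrightarrow> x \<in> S" for x
    proof -
      have "x \<in># roots P \<longleftrightarrow> is_root P x" by (rule roots_mem_iff_is_root[OF Pc])
      also have "\<dots> \<longleftrightarrow> x \<in> S"
        unfolding is_root_def S_def using Pne evP r_right_minus_eq[of "x [^] q" x] by auto
      finally show ?thesis .
    qed
    thus ?thesis by auto
  qed
  have sizeP: "size (roots P) = q" using roots_over_carrier[OF Pc] degP by (simp add: splitted_def)
  have mult1: "count (roots P) a \<le> 1" for a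
  proof (rule ccontr)
    assume "\<not> count (roots P) a \<le> 1"
    hence am: "2 \<le> alg_mult P a" using alg_mult_eq_count_roots[OF Pc] by simp
    hence a: "a \<in> carrier L" unfolding alg_mult_def by (auto split: if_splits)
    have "is_root P a" using alg_mult_gt_zero_iff_is_root[OF Pc, of a] am by linarith
    hence aq: "a [^] q = a" using rootsS roots_mem_iff_is_root[OF Pc] by (auto simp: S_def)
    define Y where "Y = [\<one>, \<ominus> a]"
    have Yc: "Y \<in> carrier (poly_ring L)"
      using univ_poly_carrier[of L "carrier L" Y] a by (auto simp: Y_def polynomial_def)
    have Yne: "Y \<noteq> \<zero>\<^bsub>poly_ring L\<^esub>" by (simp add: Y_def univ_poly_zero)
    define c where "c = poly_of_const a"
    have Lid: "L\<lparr>carrier := carrier L\<rparr> = L" by simp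
    have Hhom: "poly_of_const \<in> ring_hom L (poly_ring L)"
      using canonical_embedding_is_hom[OF carrier_is_subring] Lid by simp
    interpret H: ring_hom_ring L "poly_ring L" poly_of_const
      using Hhom by (intro ring_hom_ringI2) (auto intro: ring_axioms UP.ring_axioms)
    have cc: "c \<in> carrier (poly_ring L)" using Hhom a by (auto simp: c_def ring_hom_def)
    have XY: "X = Y \<oplus>\<^bsub>poly_ring L\<^esub> c"
    proof (cases "a = \<zero>")
      case True
      thus ?thesis by (simp add: Y_def c_def var_def poly_of_const_def univ_poly_add)
    next
      case False
      thus ?thesis using a by (simp add: Y_def c_def var_def poly_of_const_def univ_poly_add l_neg)
    qed
    have chUP: "[p] \<cdot>\<^bsub>poly_ring L\<^esub> \<one>\<^bsub>poly_ring L\<^esub> = \<zero>\<^bsub>poly_ring L\<^esub>"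
    proof -
      have "[p] \<cdot>\<^bsub>poly_ring L\<^esub> \<one>\<^bsub>poly_ring L\<^esub> = [p] \<cdot>\<^bsub>poly_ring L\<^esub> (poly_of_const \<one>)" by simp
      also have "\<dots> = poly_of_const ([p] \<cdot> \<one>)" using H.hom_add_pow_nat[of \<one> p] by simp
      also have "\<dots> = \<zero>\<^bsub>poly_ring L\<^esub>" using ch by simp
      finally show ?thesis .
    qed
    have cq: "c [^]\<^bsub>poly_ring L\<^esub> q = c"
      using H.hom_nat_pow[of a q] a aq by (simp add: c_def)
    have "X [^]\<^bsub>poly_ring L\<^esub> q = Y [^]\<^bsub>poly_ring L\<^esub> q \<oplus>\<^bsub>poly_ring L\<^esub> c [^]\<^bsub>poly_ring L\<^esub> q"
      unfolding XY q_def by (rule UP.frobenius_pow[OF p chUP Yc cc])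
    hence "P = (Y [^]\<^bsub>poly_ring L\<^esub> q \<oplus>\<^bsub>poly_ring L\<^esub> c) \<ominus>\<^bsub>poly_ring L\<^esub> (Y \<oplus>\<^bsub>poly_ring L\<^esub> c)"
      unfolding P_def using cq XY by simp
    also have "\<dots> = Y [^]\<^bsub>poly_ring L\<^esub> q \<ominus>\<^bsub>poly_ring L\<^esub> Y"
      using Yc cc by (intro UP.aux_cancel_add) auto
    also have "Y [^]\<^bsub>poly_ring L\<^esub> q = Y \<otimes>\<^bsub>poly_ring L\<^esub> Y [^]\<^bsub>poly_ring L\<^esub> (q - 1)"
    proof -
      have "q = Suc (q - 1)" using q2 by simp
      hence "Y [^]\<^bsub>poly_ring L\<^esub> q = Y [^]\<^bsub>poly_ring L\<^esub> (q - 1) \<otimes>\<^bsub>poly_ring L\<^esub> Y"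
        by (metis UP.nat_pow_Suc)
      thus ?thesis using Yc by (simp add: UP.m_comm)
    qed
    also have "Y \<otimes>\<^bsub>poly_ring L\<^esub> Y [^]\<^bsub>poly_ring L\<^esub> (q - 1) \<ominus>\<^bsub>poly_ring L\<^esub> Y =
        Y \<otimes>\<^bsub>poly_ring L\<^esub> (Y [^]\<^bsub>poly_ring L\<^esub> (q - 1) \<ominus>\<^bsub>poly_ring L\<^esub> \<one>\<^bsub>poly_ring L\<^esub>)"
      using Yc by (intro UP.aux_factor) auto
    finally have P2: "P = Y \<otimes>\<^bsub>poly_ring L\<^esub> (Y [^]\<^bsub>poly_ring L\<^esub> (q - 1) \<ominus>\<^bsub>poly_ring L\<^esub> \<one>\<^bsub>poly_ring L\<^esub>)" .
    have "(Y [^]\<^bsub>poly_ring L\<^esub> (2::nat)) pdivides P"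
      using le_alg_mult_imp_pdivides[OF a Pc am] by (simp add: Y_def)
    then obtain h where hc: "h \<in> carrier (poly_ring L)" and Ph: "P = Y [^]\<^bsub>poly_ring L\<^esub> (2::nat) \<otimes>\<^bsub>poly_ring L\<^esub> h"
      unfolding pdivides_def factor_def by auto
    have "Y [^]\<^bsub>poly_ring L\<^esub> (2::nat) = Y \<otimes>\<^bsub>poly_ring L\<^esub> Y"
      using Yc by (simp add: numeral_2_eq_2)
    hence "P = Y \<otimes>\<^bsub>poly_ring L\<^esub> (Y \<otimes>\<^bsub>poly_ring L\<^esub> h)" using Ph Yc hc by (simp add: UP.m_assoc)
    hence "Y \<otimes>\<^bsub>poly_ring L\<^esub> (Y \<otimes>\<^bsub>poly_ring L\<^esub> h) =
        Y \<otimes>\<^bsub>poly_ring L\<^esub> (Y [^]\<^bsub>poly_ring L\<^esub> (q - 1) \<ominus>\<^bsub>poly_ring L\<^esub> \<one>\<^bsub>poly_ring L\<^esub>)" using P2 by simp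
    hence eq: "Y \<otimes>\<^bsub>poly_ring L\<^esub> h = Y [^]\<^bsub>poly_ring L\<^esub> (q - 1) \<ominus>\<^bsub>poly_ring L\<^esub> \<one>\<^bsub>poly_ring L\<^esub>"
      using UP.m_lcancel[OF Yne Yc] Yc hc by simp
    interpret E: ring_hom_ring "poly_ring L" L "\<lambda>p. eval p a"
      using eval_ring_hom[OF carrier_is_subring a] .
    have eY: "eval Y a = \<zero>" using a by (simp add: Y_def r_neg)
    have "eval (Y \<otimes>\<^bsub>poly_ring L\<^esub> h) a = \<zero>" using Yc hc eY eval_in_carrier by simp
    moreover have "eval (Y [^]\<^bsub>poly_ring L\<^esub> (q - 1) \<ominus>\<^bsub>poly_ring L\<^esub> \<one>\<^bsub>poly_ring L\<^esub>) a = \<ominus> \<one>"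
    proof -
      have "eval (Y [^]\<^bsub>poly_ring L\<^esub> (q - 1) \<ominus>\<^bsub>poly_ring L\<^esub> \<one>\<^bsub>poly_ring L\<^esub>) a =
          eval (Y [^]\<^bsub>poly_ring L\<^esub> (q - 1)) a \<oplus> \<ominus> \<one>"
        unfolding a_minus_def using Yc by simp
      also have "eval (Y [^]\<^bsub>poly_ring L\<^esub> (q - 1)) a = \<zero> [^] (q - 1)"
        using E.hom_nat_pow Yc eY by simp
      also have "\<zero> [^] (q - 1) = \<zero>" using q2 by (simp add: nat_pow_zero)
      finally show ?thesis by simp
    qed
    ultimately have "\<zero> = \<ominus> \<one>" using eq by simp
    hence "\<one> = \<zero>" by (metis a_inv_closed one_closed minus_minus minus_zero)
    thus False by simp
  qed
  have "card S = q"
    using size_eq_card_set_mset[OF mult1] sizeP rootsS by simp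
  moreover have "finite S" using rootsS by (metis finite_set_mset)
  ultimately show ?thesis using subfield by (auto simp: q_def)
qed

end



lemma card_set_mset_le: "card (set_mset M) \<le> size M"
proof (induction M)
  case empty thus ?case by simp
next
  case (add x M)
  have "card (insert x (set_mset M)) \<le> Suc (card (set_mset M))" by (simp add: card_insert_if)
  thus ?case using add by simp
qed

context field
begin

lemma aux_ring_id:
  assumes "a \<in> carrier R" "b \<in> carrier R" "y \<in> carrier R" "E \<in> carrier R" "F \<in> carrier R"
  shows "(a \<ominus> b) \<otimes> y \<oplus> (E \<ominus> F) = (a \<otimes> y \<oplus> E) \<ominus> (b \<otimes> y \<oplus> F)"
  using assms by algebra

lemma eval_map2_minus:
  assumes "length cs = length ds" "set cs \<subseteq> carrier R" "set ds \<subseteq> carrier R" "x \<in> carrier R"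
  shows "eval (map2 (\<lambda>a b. a \<ominus> b) cs ds) x = eval cs x \<ominus> eval ds x"
  using assms
proof (induction cs ds rule: list_induct2)
  case Nil thus ?case by (simp add: a_minus_def)
next
  case (Cons a cs b ds)
  have ev: "eval cs x \<in> carrier R" "eval ds x \<in> carrier R" using Cons eval_in_carrier by auto
  have xp: "x [^] length cs \<in> carrier R" using Cons by simp
  have "eval (map2 (\<lambda>a b. a \<ominus> b) (a#cs) (b#ds)) x = (a \<ominus> b) \<otimes> x [^] length cs \<oplus> (eval cs x \<ominus> eval ds x)"
    using Cons by simp
  also have "\<dots> = (a \<otimes> x [^] length cs \<oplus> eval cs x) \<ominus> (b \<otimes> x [^] length ds \<oplus> eval ds x)"
    using Cons(1) aux_ring_id[of a b "x [^] length cs" "eval cs x" "eval ds x"] Cons.prems ev xp by simp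
  also have "\<dots> = eval (a#cs) x \<ominus> eval (b#ds) x" by simp
  finally show ?case .
qed

lemma normalize_nonempty:
  assumes "\<exists>a \<in> set e. a \<noteq> \<zero>"
  shows "normalize e \<noteq> []"
  using assms by (induction e) auto

lemma root_bound:
  assumes "length cs = k" "length ds = k" "set cs \<subseteq> carrier R" "set ds \<subseteq> carrier R" "cs \<noteq> ds"
  shows "card {x \<in> carrier R. eval cs x = eval ds x} \<le> k - 1"
proof -
  define e where "e = map2 (\<lambda>a b. a \<ominus> b) cs ds"
  have le: "length e = k" using assms by (simp add: e_def)
  have eS: "set e \<subseteq> carrier R"
  proof
    fix a assume "a \<in> set e"
    then obtain i where i: "i < length e" "a = e ! i" by (auto simp: in_set_conv_nth)
    hence "i < length cs" "i < length ds" using le assms by auto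
    hence "cs ! i \<in> carrier R" "ds ! i \<in> carrier R" using assms nth_mem by blast+
    moreover have "a = cs ! i \<ominus> ds ! i" using i \<open>i < length cs\<close> \<open>i < length ds\<close> by (simp add: e_def)
    ultimately show "a \<in> carrier R" by simp
  qed
  have "\<exists>a \<in> set e. a \<noteq> \<zero>"
  proof (rule ccontr)
    assume "\<not> (\<exists>a \<in> set e. a \<noteq> \<zero>)"
    hence z: "\<forall>a\<in>set e. a = \<zero>" by simp
    have "cs = ds"
    proof (rule nth_equalityI)
      show "length cs = length ds" using assms by simp
      fix i assume "i < length cs"
      hence "e ! i = \<zero>" using z le assms by (simp add: nth_mem)
      hence "cs ! i \<ominus> ds ! i = \<zero>" using \<open>i < length cs\<close> assms by (simp add: e_def)
      thus "cs ! i = ds ! i" using assms \<open>i < length cs\<close>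
        by (metis nth_mem r_right_minus_eq subsetD)
    qed
    thus False using assms by simp
  qed
  hence ne: "normalize e \<noteq> []" by (rule normalize_nonempty)
  define p where "p = normalize e"
  have pc: "p \<in> carrier (poly_ring R)"
    unfolding p_def using normalize_gives_polynomial[OF eS] univ_poly_carrier by blast
  have degp: "degree p \<le> k - 1" unfolding p_def using normalize_length_le[of e] le by simp
  have "{x \<in> carrier R. eval cs x = eval ds x} = {x. is_root p x}"
  proof -
    have "eval cs x = eval ds x \<longleftrightarrow> eval p x = \<zero>" if "x \<in> carrier R" for x
    proof -
      have "eval p x = eval e x" unfolding p_def using eval_normalize eS that by simp
      also have "\<dots> = eval cs x \<ominus> eval ds x"
        unfolding e_def using eval_map2_minus assms that by simp
      finally have "eval p x = eval cs x \<ominus> eval ds x" .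
      moreover have "eval cs x \<in> carrier R" "eval ds x \<in> carrier R" using assms that eval_in_carrier by auto
      ultimately show ?thesis using r_right_minus_eq by simp
    qed
    thus ?thesis using ne unfolding is_root_def p_def by auto
  qed
  also have "\<dots> = set_mset (roots p)" using roots_mem_iff_is_root[OF pc] by auto
  finally have "card {x \<in> carrier R. eval cs x = eval ds x} = card (set_mset (roots p))" by simp
  also have "\<dots> \<le> size (roots p)" by (rule card_set_mset_le)
  also have "\<dots> \<le> degree p" by (rule size_roots_le_degree[OF pc])
  finally show ?thesis using degp by simp
qed


lemma eval_cons_eq_iff:
  assumes "a \<in> carrier R" "set cs \<subseteq> carrier R" "set ds \<subseteq> carrier R" "length cs = length ds" "x \<in> carrier R"
  shows "eval (a # cs) x = eval (a # ds) x \<longleftrightarrow> eval cs x = eval ds x"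
proof -
  have A: "a \<otimes> x [^] length cs \<in> carrier R" using assms by simp
  have E: "eval cs x \<in> carrier R" "eval ds x \<in> carrier R" using assms eval_in_carrier by auto
  have "eval (a # cs) x = eval cs x \<oplus> a \<otimes> x [^] length cs" using A E by (simp add: a_comm)
  moreover have "eval (a # ds) x = eval ds x \<oplus> a \<otimes> x [^] length cs" using A E assms(4) by (simp add: a_comm)
  ultimately show ?thesis using A E add.right_cancel by simp
qed

lemma mds_from_field:
  assumes fin: "finite (carrier R)" and cardR: "card (carrier R) = m" and t0: "0 < t" and tl: "t \<le> l" and lm: "l \<le> m + 1"
  shows "\<exists>\<Phi>::nat list set. \<Phi> \<subseteq> words {..<m} l \<and> card \<Phi> = m ^ t \<and>
     (\<forall>\<phi>\<in>\<Phi>. \<forall>\<psi>\<in>\<Phi>. \<phi> \<noteq> \<psi> \<longrightarrow> card {j. j < l \<and> \<phi>!j = \<psi>!j} \<le> t - 1)"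
proof -
  obtain \<alpha> where \<alpha>: "bij_betw \<alpha> {0..<m} (carrier R)"
    using ex_bij_betw_nat_finite[OF fin] cardR by metis
  define \<beta> where "\<beta> = the_inv_into {0..<m} \<alpha>"
  have \<beta>: "bij_betw \<beta> (carrier R) {0..<m}" unfolding \<beta>_def by (rule bij_betw_the_inv_into[OF \<alpha>])
  have \<beta>inj: "inj_on \<beta> (carrier R)" using \<beta> by (simp add: bij_betw_def)
  have \<alpha>inj: "inj_on \<alpha> {0..<m}" using \<alpha> by (simp add: bij_betw_def)
  have \<alpha>c: "\<alpha> j \<in> carrier R" if "j < m" for j using \<alpha> that by (auto simp: bij_betw_def)
  have \<beta>m: "\<beta> x < m" if "x \<in> carrier R" for x using \<beta> that by (auto simp: bij_betw_def)
  define w where "w = (\<lambda>cs. map (\<lambda>j. if j < m then \<beta> (eval cs (\<alpha> j)) else \<beta> (hd cs)) [0..<l])"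
  define T where "T = {cs. set cs \<subseteq> carrier R \<and> length cs = t}"
  have w_nth: "w cs ! j = (if j < m then \<beta> (eval cs (\<alpha> j)) else \<beta> (hd cs))" if "j < l" for cs j
    using that by (simp add: w_def)
  have hdc: "hd cs \<in> carrier R" if "cs \<in> T" for cs
  proof -
    have "cs \<noteq> []" using that t0 by (auto simp: T_def)
    thus ?thesis using that by (auto simp: T_def)
  qed
  have agr: "card {j. j < l \<and> w cs ! j = w ds ! j} \<le> t - 1"
    if cs: "cs \<in> T" and ds: "ds \<in> T" and ne: "cs \<noteq> ds" for cs ds
  proof -
    have csc: "set cs \<subseteq> carrier R" "length cs = t" and dsc: "set ds \<subseteq> carrier R" "length ds = t"
      using cs ds by (auto simp: T_def)
    define G where "G = {j. j < m \<and> eval cs (\<alpha> j) = eval ds (\<alpha> j)}"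
    define Z where "Z = {x \<in> carrier R. eval cs x = eval ds x}"
    have finG: "finite G" unfolding G_def by simp
    have cardG: "card G \<le> card Z"
    proof -
      have "G \<subseteq> {0..<m}" by (auto simp: G_def)
      hence "inj_on \<alpha> G" using inj_on_subset[OF \<alpha>inj] by blast
      hence "card G = card (\<alpha> ` G)" by (simp add: card_image)
      also have "\<dots> \<le> card Z"
        by (rule card_mono) (auto simp: Z_def G_def fin \<alpha>c)
      finally show ?thesis .
    qed
    have sub: "{j. j < l \<and> w cs ! j = w ds ! j} \<subseteq> G \<union> {j. j = m \<and> hd cs = hd ds}"
    proof
      fix j assume "j \<in> {j. j < l \<and> w cs ! j = w ds ! j}"
      hence j: "j < l" "w cs ! j = w ds ! j" by auto
      show "j \<in> G \<union> {j. j = m \<and> hd cs = hd ds}"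
      proof (cases "j < m")
        case True
        have "eval cs (\<alpha> j) \<in> carrier R" "eval ds (\<alpha> j) \<in> carrier R"
          using eval_in_carrier csc dsc \<alpha>c True by auto
        moreover have "\<beta> (eval cs (\<alpha> j)) = \<beta> (eval ds (\<alpha> j))" using j True w_nth by simp
        ultimately have "eval cs (\<alpha> j) = eval ds (\<alpha> j)" using \<beta>inj by (auto dest: inj_onD)
        thus ?thesis using True by (simp add: G_def)
      next
        case False
        hence jm: "j = m" using j lm by simp
        have "\<beta> (hd cs) = \<beta> (hd ds)" using j False w_nth by simp
        hence "hd cs = hd ds" using \<beta>inj hdc cs ds by (auto dest: inj_onD)
        thus ?thesis using jm by simp
      qed
    qed
    show ?thesis
    proof (cases "hd cs = hd ds")
      case False
      hence "{j. j < l \<and> w cs ! j = w ds ! j} \<subseteq> G" using sub by auto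
      hence "card {j. j < l \<and> w cs ! j = w ds ! j} \<le> card G" by (intro card_mono finG)
      also have "\<dots> \<le> card Z" by (rule cardG)
      also have "\<dots> \<le> t - 1" unfolding Z_def by (rule root_bound[OF csc(2) dsc(2) csc(1) dsc(1) ne])
      finally show ?thesis .
    next
      case True
      obtain a cs' where cs': "cs = a # cs'" using csc t0 by (cases cs) auto
      obtain b ds' where ds': "ds = b # ds'" using dsc t0 by (cases ds) auto
      have ab: "b = a" using True cs' ds' by simp
      have ne': "cs' \<noteq> ds'" using ne cs' ds' ab by simp
      have l': "length cs' = t - 1" "length ds' = t - 1" using csc dsc cs' ds' by auto
      have c': "set cs' \<subseteq> carrier R" "set ds' \<subseteq> carrier R" "a \<in> carrier R" using csc dsc cs' ds' by auto
      have "t \<ge> 2"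
      proof (rule ccontr)
        assume "\<not> t \<ge> 2"
        hence "t - 1 = 0" by simp
        hence "cs' = []" "ds' = []" using l' by auto
        thus False using ne' by simp
      qed
      have "Z = {x \<in> carrier R. eval cs' x = eval ds' x}"
        unfolding Z_def cs' ds' ab using eval_cons_eq_iff[OF c'(3) c'(1) c'(2)] l' by auto
      hence "card Z \<le> t - 1 - 1" using root_bound[OF l'(1) l'(2) c'(1) c'(2) ne'] by simp
      hence "card G \<le> t - 2" using cardG by simp
      have "card {j. j < l \<and> w cs ! j = w ds ! j} \<le> card (G \<union> {j. j = m \<and> hd cs = hd ds})"
        using sub finG by (intro card_mono) auto
      also have "\<dots> \<le> card G + card {j. j = m \<and> hd cs = hd ds}" by (rule card_Un_le)
      also have "\<dots> \<le> card G + 1" by (simp add: True)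
      finally show ?thesis using \<open>card G \<le> t - 2\<close> \<open>t \<ge> 2\<close> by linarith
    qed
  qed
  have winj: "inj_on w T"
  proof (rule inj_onI, rule ccontr)
    fix cs ds assume H: "cs \<in> T" "ds \<in> T" "w cs = w ds" "cs \<noteq> ds"
    have "{j. j < l \<and> w cs ! j = w ds ! j} = {..<l}" using H(3) by auto
    hence "l \<le> t - 1" using agr[OF H(1,2,4)] by simp
    thus False using tl t0 by linarith
  qed
  have wW: "w cs \<in> words {..<m} l" if "cs \<in> T" for cs
  proof -
    have "w cs ! j < m" if "j < l" for j
      using w_nth[OF that] \<beta>m hdc[OF \<open>cs \<in> T\<close>] eval_in_carrier \<alpha>c \<open>cs \<in> T\<close>
      by (auto simp: T_def)
    hence lt: "w cs ! j < m" if "j < l" for j using that by blast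
    have len: "length (w cs) = l" by (simp add: w_def)
    have "set (w cs) \<subseteq> {..<m}"
    proof
      fix x assume "x \<in> set (w cs)"
      then obtain j where "j < length (w cs)" "x = w cs ! j" by (auto simp: in_set_conv_nth)
      thus "x \<in> {..<m}" using lt len by simp
    qed
    thus ?thesis using len by (simp add: words_def)
  qed
  have cardT: "card T = m ^ t"
  proof -
    have "T = {xs. set xs \<subseteq> carrier R \<and> length xs = t}" by (simp add: T_def)
    thus ?thesis using card_lists_length_eq[OF fin] cardR by simp
  qed
  show ?thesis
  proof (intro exI conjI)
    show "w ` T \<subseteq> words {..<m} l" using wW by auto
    show "card (w ` T) = m ^ t" using card_image[OF winj] cardT by simp
    show "\<forall>\<phi>\<in>w ` T. \<forall>\<psi>\<in>w ` T. \<phi> \<noteq> \<psi> \<longrightarrow> card {j. j < l \<and> \<phi> ! j = \<psi> ! j} \<le> t - 1"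
      using agr by auto
  qed
qed

end


lemma finite_field_exists:
  fixes p n :: nat
  assumes p: "normalization_semidom_class.prime p" and n: "n > 0"
  shows "\<exists>R :: ((int list \<times> nat) multiset \<Rightarrow> int) ring. field R \<and> finite (carrier R) \<and> card (carrier R) = p ^ n"
proof -
  define K where "K = residue_ring (int p)"
  have Kf: "field K" unfolding K_def using residues_prime.is_field[of p] p
    by (simp add: residues_prime_def)
  interpret F: field K by (rule Kf)
  have p1: "p > 1" using p prime_gt_1_nat by blast
  have chK_aux: "[k] \<cdot>\<^bsub>K\<^esub> \<one>\<^bsub>K\<^esub> = int k mod int p" for k :: nat
  proof (induction k)
    case 0
    have "[(0::nat)] \<cdot>\<^bsub>K\<^esub> \<one>\<^bsub>K\<^esub> = \<zero>\<^bsub>K\<^esub>" by simp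
    thus ?case by (simp add: K_def residue_ring_def)
  next
    case (Suc k)
    have "[Suc k] \<cdot>\<^bsub>K\<^esub> \<one>\<^bsub>K\<^esub> = [k] \<cdot>\<^bsub>K\<^esub> \<one>\<^bsub>K\<^esub> \<oplus>\<^bsub>K\<^esub> \<one>\<^bsub>K\<^esub>" by (simp add: F.add.nat_pow_Suc)
    also have "\<dots> = (int k mod int p + 1) mod int p" using Suc by (simp add: K_def residue_ring_def)
    also have "\<dots> = int (Suc k) mod int p" by (metis mod_add_left_eq of_nat_Suc add.commute)
    finally show ?case .
  qed
  have chK: "[p] \<cdot>\<^bsub>K\<^esub> \<one>\<^bsub>K\<^esub> = \<zero>\<^bsub>K\<^esub>" using chK_aux[of p] by (simp add: K_def residue_ring_def)
  define L where "L = F.alg_closure"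
  interpret A: algebraic_closure L "F.indexed_const ` carrier K"
    unfolding L_def by (rule F.alg_closureE(1))
  have hom: "F.indexed_const \<in> ring_hom K L" unfolding L_def by (rule F.alg_closureE(2))
  interpret H: ring_hom_ring K L F.indexed_const
    using hom by (intro ring_hom_ringI2) (auto intro: F.ring_axioms A.ring_axioms)
  have chL: "[p] \<cdot>\<^bsub>L\<^esub> \<one>\<^bsub>L\<^esub> = \<zero>\<^bsub>L\<^esub>"
  proof -
    have "[p] \<cdot>\<^bsub>L\<^esub> \<one>\<^bsub>L\<^esub> = [p] \<cdot>\<^bsub>L\<^esub> (F.indexed_const \<one>\<^bsub>K\<^esub>)" by simp
    also have "\<dots> = F.indexed_const ([p] \<cdot>\<^bsub>K\<^esub> \<one>\<^bsub>K\<^esub>)" using H.hom_add_pow_nat[of "\<one>\<^bsub>K\<^esub>" p] by simp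
    also have "\<dots> = \<zero>\<^bsub>L\<^esub>" using chK by simp
    finally show ?thesis .
  qed
  obtain S where S: "subfield S L" "finite S" "card S = p ^ n"
    using A.finite_subfield_exists[OF p chL n] by blast
  have "field (L\<lparr>carrier := S\<rparr>)" using A.subfield_iff(2)[OF S(1)] .
  thus ?thesis using S by (intro exI[of _ "L\<lparr>carrier := S\<rparr>"]) (simp add: L_def)
qed

lemma mds_code:
  assumes "primepow m" "t > 0" "t \<le> l" "l \<le> m + 1"
  shows "\<exists>\<Phi>::nat list set. \<Phi> \<subseteq> words {..<m} l \<and> card \<Phi> = m ^ t \<and>
     (\<forall>\<phi>\<in>\<Phi>. \<forall>\<psi>\<in>\<Phi>. \<phi> \<noteq> \<psi> \<longrightarrow> card {j. j < l \<and> \<phi>!j = \<psi>!j} \<le> t - 1)"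
proof -
  obtain p k where pk: "normalization_semidom_class.prime p" "k > 0" "m = p ^ k" using assms(1) by (auto simp: primepow_def)
  obtain R :: "((int list \<times> nat) multiset \<Rightarrow> int) ring" where R: "field R" "finite (carrier R)" "card (carrier R) = m"
    using finite_field_exists[OF pk(1,2)] pk(3) by blast
  interpret R: field R by (rule R(1))
  show ?thesis by (rule R.mds_from_field[OF R(2) R(3) assms(2,3,4)])
qed


lemma finite_words: "finite F \<Longrightarrow> finite (words F l)"
proof -
  assume "finite F"
  have "words F l = {xs. set xs \<subseteq> F \<and> length xs = l}" by (auto simp: words_def)
  thus ?thesis using finite_lists_length_eq[OF \<open>finite F\<close>] by simp
qed

lemma arith_bound:
  fixes a b m s :: nat
  assumes "a < s - 1" "b < m"
  shows "a * m + b + 1 < (s - 1) * m + 1"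
proof -
  have "a * m + b < a * m + m" using assms by simp
  also have "\<dots> = (a + 1) * m" by simp
  also have "\<dots> \<le> (s - 1) * m" using assms by (intro mult_right_mono) auto
  finally show ?thesis by simp
qed

lemma arith_dec:
  fixes a b u v m :: nat
  assumes "a * m + u = b * m + v" "u < m" "v < m"
  shows "a = b \<and> u = v"
proof -
  have m0: "m > 0" using assms by simp
  have 1: "(a * m + u) div m = a" "(a * m + u) mod m = u" using assms(2) m0 by auto
  have 2: "(b * m + v) div m = b" "(b * m + v) mod m = v" using assms(3) m0 by auto
  show ?thesis using 1 2 assms(1) by metis
qed

theorem lemma1:
  fixes m l s t c r M :: nat and S :: "'a set" and C :: "'a list set"
  assumes "primepow m"
    and "l > 0" and "s > 0" and "t > 0"
    and "l \<le> m + 1"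
    and "2 * t - 1 \<le> l"
    and "c \<ge> t"
    and "l = c * (t - 1) + r" and "t \<le> r" and "r \<le> c"
    and "qary_frameproof s S l c C" and "card C = M" and "property_P t S l C"
  shows "\<exists>(F :: nat set) (D :: nat list set).
           qary_frameproof ((s - 1) * m + 1) F l c D \<and> card D = M * m ^ t"
proof -
  have tl: "t \<le> l" using assms(6) assms(4) by linarith
  obtain \<Phi> where \<Phi>w: "\<Phi> \<subseteq> words {..<m} l" and \<Phi>card: "card \<Phi> = m ^ t"
    and \<Phi>agr: "\<And>\<phi> \<psi>. \<phi>\<in>\<Phi> \<Longrightarrow> \<psi>\<in>\<Phi> \<Longrightarrow> \<phi> \<noteq> \<psi> \<Longrightarrow> card {j. j < l \<and> \<phi>!j = \<psi>!j} \<le> t - 1"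
    using mds_code[OF assms(1) assms(4) tl assms(5)] by blast
  have finS: "finite S" and cardS: "card S = s" and fpC: "frameproof S l c C"
    using assms(11) by (auto simp: qary_frameproof_def)
  have c2: "2 \<le> c" and CW: "C \<subseteq> words S l" using fpC by (auto simp: frameproof_def)
  obtain inf where infS: "inf \<in> S"
    and infcnt: "\<And>x. x \<in> C \<Longrightarrow> card {j. j < l \<and> x ! j = inf} \<le> t - 1"
    and uniq: "\<And>x y. x\<in>C \<Longrightarrow> y\<in>C \<Longrightarrow> (\<exists>J. J \<subseteq> {..<l} \<and> card J = t \<and>
          (\<forall>j\<in>J. x ! j = y ! j \<and> x ! j \<noteq> inf)) \<Longrightarrow> x = y"
    using assms(13) unfolding property_P_def by blast
  have finS': "finite (S - {inf})" using finS by simp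
  have cardS': "card (S - {inf}) = s - 1" using cardS infS finS by simp
  obtain \<sigma> where \<sigma>: "bij_betw \<sigma> (S - {inf}) {0..<s-1}"
    using ex_bij_betw_finite_nat[OF finS'] cardS' by metis
  define enc where "enc = (\<lambda>(x::'a list) (\<phi>::nat list). map (\<lambda>j. if x!j = inf then 0 else \<sigma> (x!j) * m + \<phi>!j + 1) [0..<l])"
  define F where "F = {..<(s-1)*m+1}"
  define D where "D = (\<lambda>(x,\<phi>). enc x \<phi>) ` (C \<times> \<Phi>)"
  have xlen: "length x = l" and xS: "\<And>j. j < l \<Longrightarrow> x ! j \<in> S" if "x \<in> C" for x
  proof -
    have "x \<in> words S l" using that CW by auto
    hence L: "length x = l" and "set x \<subseteq> S" by (auto simp: words_def)
    thus "length x = l" by simp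
    fix j assume "j < l" thus "x ! j \<in> S" using L \<open>set x \<subseteq> S\<close> nth_mem by blast
  qed
  have \<phi>len: "length \<phi> = l" and \<phi>m: "\<And>j. j < l \<Longrightarrow> \<phi> ! j < m" if "\<phi> \<in> \<Phi>" for \<phi>
  proof -
    have "\<phi> \<in> words {..<m} l" using that \<Phi>w by auto
    hence L: "length \<phi> = l" and "set \<phi> \<subseteq> {..<m}" by (auto simp: words_def)
    thus "length \<phi> = l" by simp
    fix j assume "j < l" thus "\<phi> ! j < m" using L \<open>set \<phi> \<subseteq> {..<m}\<close> nth_mem by blast
  qed
  have enc_nth: "enc x \<phi> ! j = (if x!j = inf then 0 else \<sigma> (x!j) * m + \<phi>!j + 1)" if "j < l" for x \<phi> j
    using that by (simp add: enc_def)
  have enc_len: "length (enc x \<phi>) = l" for x \<phi> by (simp add: enc_def)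
  have enc_words: "enc x \<phi> \<in> words F l" if "x \<in> C" "\<phi> \<in> \<Phi>" for x \<phi>
  proof -
    have "enc x \<phi> ! j \<in> F" if j: "j < l" for j
    proof (cases "x!j = inf")
      case False
      hence "x!j \<in> S - {inf}" using xS[OF \<open>x\<in>C\<close> j] by simp
      hence "\<sigma> (x!j) < s - 1" using \<sigma> by (auto simp: bij_betw_def)
      thus ?thesis using False enc_nth[OF j] arith_bound \<phi>m[OF \<open>\<phi>\<in>\<Phi>\<close> j] by (simp add: F_def)
    qed (simp add: enc_nth[OF j] F_def)
    thus ?thesis by (auto simp: words_def enc_len in_set_conv_nth)
  qed
  have key: "y!j = x!j \<and> \<phi>!j = \<psi>!j"
    if "x \<in> C" "y \<in> C" "\<phi> \<in> \<Phi>" "\<psi> \<in> \<Phi>" "j < l" "x!j \<noteq> inf" "enc x \<phi> ! j = enc y \<psi> ! j" for x y \<phi> \<psi> j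
  proof -
    have ne: "y!j \<noteq> inf" using that enc_nth by auto
    have xj: "x!j \<in> S - {inf}" "y!j \<in> S - {inf}" using xS that ne by auto
    have "\<sigma> (x!j) * m + \<phi>!j = \<sigma> (y!j) * m + \<psi>!j" using that ne enc_nth by auto
    hence "\<sigma> (x!j) = \<sigma> (y!j) \<and> \<phi>!j = \<psi>!j" using arith_dec \<phi>m that by metis
    moreover have "inj_on \<sigma> (S - {inf})" using \<sigma> by (auto simp: bij_betw_def)
    ultimately show ?thesis using xj by (auto dest: inj_onD)
  qed
  have agr: "card {j. j < l \<and> x!j \<noteq> inf \<and> enc x \<phi> ! j = enc y \<psi> ! j} \<le> t - 1"
    if "x \<in> C" "y \<in> C" "\<phi> \<in> \<Phi>" "\<psi> \<in> \<Phi>" "(x,\<phi>) \<noteq> (y,\<psi>)" for x y \<phi> \<psi>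
  proof (cases "x = y")
    case True
    hence "\<phi> \<noteq> \<psi>" using that by simp
    have sub1: "{j. j < l \<and> x!j \<noteq> inf \<and> enc x \<phi> ! j = enc y \<psi> ! j} \<subseteq> {j. j < l \<and> \<phi>!j = \<psi>!j}"
      using key that by blast
    have "card {j. j < l \<and> x!j \<noteq> inf \<and> enc x \<phi> ! j = enc y \<psi> ! j} \<le> card {j. j < l \<and> \<phi>!j = \<psi>!j}"
      by (rule card_mono[OF _ sub1]) simp
    thus ?thesis using \<Phi>agr[OF that(3,4) \<open>\<phi>\<noteq>\<psi>\<close>] by linarith
  next
    case False
    define A where "A = {j. j < l \<and> x!j = y!j \<and> x!j \<noteq> inf}"
    have sub: "{j. j < l \<and> x!j \<noteq> inf \<and> enc x \<phi> ! j = enc y \<psi> ! j} \<subseteq> A"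
    proof
      fix j assume "j \<in> {j. j < l \<and> x!j \<noteq> inf \<and> enc x \<phi> ! j = enc y \<psi> ! j}"
      hence j: "j < l" "x!j \<noteq> inf" "enc x \<phi> ! j = enc y \<psi> ! j" by auto
      show "j \<in> A" using key[OF that(1-4) j] j unfolding A_def by simp
    qed
    have "card A \<le> t - 1"
    proof (rule ccontr)
      assume "\<not> card A \<le> t - 1"
      hence "t \<le> card A" by simp
      then obtain J where J: "J \<subseteq> A" "card J = t" by (meson obtain_subset_with_card_n)
      hence "J \<subseteq> {..<l} \<and> card J = t \<and> (\<forall>j\<in>J. x ! j = y ! j \<and> x ! j \<noteq> inf)"
        unfolding A_def by auto
      hence "x = y" using uniq[OF that(1,2)] by blast
      thus False using False by simp
    qed
    moreover have "finite A" unfolding A_def by simp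
    ultimately show ?thesis using sub by (meson card_mono le_trans)
  qed
  have Ncard: "l - (t - 1) \<le> card {j. j < l \<and> x!j \<noteq> inf}" if "x \<in> C" for x
  proof -
    have "{j. j < l \<and> x!j \<noteq> inf} = {..<l} - {j. j < l \<and> x!j = inf}" by auto
    hence "card {j. j < l \<and> x!j \<noteq> inf} = card {..<l} - card {j. j < l \<and> x!j = inf}"
      using card_Diff_subset[of "{j. j < l \<and> x!j = inf}" "{..<l}"] by auto
    hence "card {j. j < l \<and> x!j \<noteq> inf} = l - card {j. j < l \<and> x!j = inf}" by simp
    thus ?thesis using infcnt[OF that] by simp
  qed
  have encinj: "inj_on (\<lambda>(x,\<phi>). enc x \<phi>) (C \<times> \<Phi>)"
  proof (rule inj_onI, clarify)
    fix x \<phi> y \<psi> assume H: "x \<in> C" "\<phi> \<in> \<Phi>" "y \<in> C" "\<psi> \<in> \<Phi>" "enc x \<phi> = enc y \<psi>"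
    have "x = y"
    proof (rule nth_equalityI)
      show "length x = length y" using xlen H by simp
      fix j assume "j < length x"
      hence j: "j < l" using xlen H by simp
      show "x ! j = y ! j"
      proof (cases "x!j = inf")
        case True
        have "enc y \<psi> ! j = 0" using H(5) True enc_nth[OF j, of x \<phi>] by simp
        hence "y!j = inf" using enc_nth[OF j, of y \<psi>] by (auto split: if_splits)
        thus ?thesis using True by simp
      next
        case False
        thus ?thesis using key[OF H(1,3,2,4) j False] H(5) by simp
      qed
    qed
    moreover have "\<phi> = \<psi>"
    proof (rule ccontr)
      assume "\<phi> \<noteq> \<psi>"
      hence "card {j. j < l \<and> x!j \<noteq> inf \<and> enc x \<phi> ! j = enc y \<psi> ! j} \<le> t - 1"
        using agr H by blast
      moreover have "{j. j < l \<and> x!j \<noteq> inf \<and> enc x \<phi> ! j = enc y \<psi> ! j} = {j. j < l \<and> x!j \<noteq> inf}"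
        using H by simp
      ultimately have "card {j. j < l \<and> x!j \<noteq> inf} \<le> t - 1" by simp
      thus False using Ncard[OF H(1)] assms(6) assms(4) by linarith
    qed
    ultimately show "x = y \<and> \<phi> = \<psi>" by simp
  qed
  have finC: "finite C" using finite_subset[OF CW finite_words[OF finS]] .
  have fin\<Phi>: "finite \<Phi>" using finite_subset[OF \<Phi>w finite_words] by simp
  have cardD: "card D = M * m ^ t"
    unfolding D_def using card_image[OF encinj] assms(12) \<Phi>card by (simp add: card_cartesian_product)
  have finD: "finite D" unfolding D_def using finC fin\<Phi> by simp
  have DW: "D \<subseteq> words F l" unfolding D_def using enc_words by auto
  have fp: "desc F l P \<inter> D = P" if P: "P \<subseteq> D" "card P \<le> c" for P
  proof
    show "P \<subseteq> desc F l P \<inter> D"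
      using P DW by (auto simp: desc_def)
  next
    show "desc F l P \<inter> D \<subseteq> P"
    proof
      fix z assume z: "z \<in> desc F l P \<inter> D"
      show "z \<in> P"
      proof (rule ccontr)
        assume zP: "z \<notin> P"
        obtain x \<phi> where x\<phi>: "x \<in> C" "\<phi> \<in> \<Phi>" "z = enc x \<phi>" using z unfolding D_def by auto
        define N where "N = {j. j < l \<and> x!j \<noteq> inf}"
        define A where "A = (\<lambda>y. {j. j < l \<and> x!j \<noteq> inf \<and> z ! j = y ! j})"
        have finP: "finite P" using finite_subset[OF P(1) finD] .
        have "N \<subseteq> (\<Union>y\<in>P. A y)"
        proof
          fix j assume "j \<in> N"
          hence "j < l" by (simp add: N_def)
          then obtain y where "y \<in> P" "z ! j = y ! j" using z by (auto simp: desc_def)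
          thus "j \<in> (\<Union>y\<in>P. A y)" using \<open>j \<in> N\<close> by (auto simp: A_def N_def)
        qed
        moreover have "finite (\<Union>y\<in>P. A y)" using finP by (auto simp: A_def)
        ultimately have "card N \<le> card (\<Union>y\<in>P. A y)" by (intro card_mono)
        also have "\<dots> \<le> (\<Sum>y\<in>P. card (A y))" using card_UN_le[OF finP] .
        also have "\<dots> \<le> (\<Sum>y\<in>P. t - 1)"
        proof (rule sum_mono)
          fix y assume "y \<in> P"
          then obtain x' \<psi> where y: "x' \<in> C" "\<psi> \<in> \<Phi>" "y = enc x' \<psi>" using P(1) unfolding D_def by auto
          have "(x,\<phi>) \<noteq> (x',\<psi>)" using zP \<open>y\<in>P\<close> x\<phi> y by auto
          thus "card (A y) \<le> t - 1" using agr[OF x\<phi>(1) y(1) x\<phi>(2) y(2)] x\<phi>(3) y(3) by (simp add: A_def)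
        qed
        also have "\<dots> = card P * (t - 1)" by simp
        also have "\<dots> \<le> c * (t - 1)" using P(2) by (simp add: mult_right_mono)
        finally have "card N \<le> c * (t - 1)" .
        moreover have "l - (t - 1) \<le> card N" using Ncard[OF x\<phi>(1)] by (simp add: N_def)
        ultimately show False using assms(8) assms(9) assms(4) by linarith
      qed
    qed
  qed
  have "qary_frameproof ((s - 1) * m + 1) F l c D"
    unfolding qary_frameproof_def frameproof_def using c2 DW fp by (auto simp: F_def)
  thus ?thesis using cardD by blast
qed

end
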